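(* Let $\theta_0\in\,]0,\pi/2[$, $\ell>0$, $\kappa>0$, and let $I:[0,\infty)\to[0,1]$ be any non-decreasing function. Then the optimization problem (OP1) with light intensity $I$ has at least one optimal solution $(h,\theta)$.
   Context: Model 1 (stem of fixed length $\ell$ and constant leaf density $\kappa$; light comes from a direction making angle $\theta_0$ as below). For $\theta\in[\theta_0,\pi/2]$ define $$G(\theta)=\Big(1-\exp\Big\{\frac{-\kappa}{\cos(\theta-\theta_0)}\Big\}\Big)\cos(\theta-\theta_0),\qquad g(\theta)=\frac{G(\theta)}{\sin\theta}.$$ Given a non-decreasing light intensity function $I:[0,\infty)\to[0,1]$, problem (OP1) is: among all pairs $(h,\theta)$ with $h>0$ and $\theta:[0,h]\to[\theta_0,\pi/2]$ measurable satisfying the length constraint $\int_0^h \frac{dy}{\sin\theta(y)}=\ell$, maximize $J(h,\theta)=\int_0^h I(y)\,g(\theta(y))\,dy$. An optimal solution is an admissible pair attaining the supremum of $J$ over all admissible pairs. *)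

theory Defs
  imports "HOL-Analysis.Analysis"
begin

definition G1 :: "real \<Rightarrow> real \<Rightarrow> real \<Rightarrow> real" where
  "G1 \<kappa> \<theta>\<^sub>0 \<theta> = (1 - exp (- \<kappa> / cos (\<theta> - \<theta>\<^sub>0))) * cos (\<theta> - \<theta>\<^sub>0)"

definition g1 :: "real \<Rightarrow> real \<Rightarrow> real \<Rightarrow> real" where
  "g1 \<kappa> \<theta>\<^sub>0 \<theta> = G1 \<kappa> \<theta>\<^sub>0 \<theta> / sin \<theta>"

definition admissible1 :: "real \<Rightarrow> real \<Rightarrow> real \<Rightarrow> (real \<Rightarrow> real) \<Rightarrow> bool" where
  "admissible1 \<theta>\<^sub>0 len h \<theta> \<longleftrightarrow>
     h > 0 \<and>
     \<theta> \<in> borel_measurable (restrict_space lborel {0..h}) \<and>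
     (\<forall>y\<in>{0..h}. \<theta> y \<in> {\<theta>\<^sub>0..pi/2}) \<and>
     (LINT y:{0..h}|lborel. 1 / sin (\<theta> y)) = len"

definition J1 :: "real \<Rightarrow> real \<Rightarrow> (real \<Rightarrow> real) \<Rightarrow> real \<Rightarrow> (real \<Rightarrow> real) \<Rightarrow> real" where
  "J1 \<kappa> \<theta>\<^sub>0 I h \<theta> = (LINT y:{0..h}|lborel. I y * g1 \<kappa> \<theta>\<^sub>0 (\<theta> y))"

definition optimal1 :: "real \<Rightarrow> real \<Rightarrow> real \<Rightarrow> (real \<Rightarrow> real) \<Rightarrow> real \<Rightarrow> (real \<Rightarrow> real) \<Rightarrow> bool" where
  "optimal1 \<kappa> \<theta>\<^sub>0 len I h \<theta> \<longleftrightarrow>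
     admissible1 \<theta>\<^sub>0 len h \<theta> \<and>
     (\<forall>h' \<theta>'. admissible1 \<theta>\<^sub>0 len h' \<theta>' \<longrightarrow> J1 \<kappa> \<theta>\<^sub>0 I h' \<theta>' \<le> J1 \<kappa> \<theta>\<^sub>0 I h \<theta>)"

end

theory Submission
  imports Defs "HOL-Probability.Helly_Selection"
begin


lemma fmono_aux:
  fixes k a b :: real assumes k: "k > 0" and a: "0 < a" and ab: "a \<le> b"
  shows "(1 - exp (- k / a)) * a \<le> (1 - exp (- k / b)) * b"
proof (rule DERIV_nonneg_imp_nondecreasing[OF ab])
  fix x assume x: "a \<le> x" "x \<le> b"
  hence xp: "x > 0" using a by simp
  have "DERIV (\<lambda>c. (1 - exp (- k / c)) * c) x :> ((- (exp (- k / x) * (k / x^2))) * x + (1 - exp (- k / x)))"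
    using xp by (auto intro!: derivative_eq_intros simp: power2_eq_square field_simps)
  moreover have "((- (exp (- k / x) * (k / x^2))) * x + (1 - exp (- k / x))) \<ge> 0"
  proof -
    have e: "1 + k/x \<le> exp (k/x)" by (rule exp_ge_add_one_self)
    have "exp (- k / x) * (1 + k/x) \<le> exp (- k/x) * exp (k/x)"
      using e by (intro mult_left_mono) auto
    also have "\<dots> = 1" by (simp add: exp_minus_inverse[symmetric] exp_add[symmetric])
    finally have "exp (- k / x) * (1 + k/x) \<le> 1" .
    moreover have "(- (exp (- k / x) * (k / x^2))) * x + (1 - exp (- k / x)) = 1 - exp (- k / x) * (1 + k/x)"
      using xp by (simp add: power2_eq_square field_simps)
    ultimately show ?thesis by simp
  qed
  ultimately show "\<exists>y. DERIV (\<lambda>c. (1 - exp (- k / c)) * c) x :> y \<and> y \<ge> 0" by blast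
qed

locale stem =
  fixes t0 k :: real
  assumes t0: "0 < t0" "t0 < pi/2" and k: "k > 0"
begin

lemma G1_nonneg: assumes "t0 \<le> a" "a \<le> pi/2" shows "0 \<le> G1 k t0 a"
proof -
  have c: "cos (a - t0) > 0" using assms t0 by (intro cos_gt_zero_pi) auto
  hence "- k / cos (a - t0) \<le> 0" using k by (simp add: divide_nonneg_pos)
  hence "exp (- k / cos (a - t0)) \<le> 1" by simp
  thus ?thesis unfolding G1_def using c by simp
qed

lemma G1_le1: assumes "t0 \<le> a" "a \<le> pi/2" shows "G1 k t0 a \<le> 1"
proof -
  have c: "cos (a - t0) > 0" using assms t0 by (intro cos_gt_zero_pi) auto
  have "0 \<le> 1 - exp (- k / cos (a - t0))" "1 - exp (- k / cos (a - t0)) \<le> 1"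
    using c k by (auto simp: divide_nonneg_pos)
  moreover have "cos (a - t0) \<le> 1" by simp
  ultimately show ?thesis unfolding G1_def using c by (metis mult_le_one less_imp_le)
qed

lemma G1_antimono: assumes "t0 \<le> a" "a \<le> b" "b \<le> pi/2" shows "G1 k t0 b \<le> G1 k t0 a"
proof -
  have cb: "cos (b - t0) > 0" using assms t0 by (intro cos_gt_zero_pi) auto
  have "cos (b - t0) \<le> cos (a - t0)" using assms t0 by (intro cos_monotone_0_pi_le) auto
  thus ?thesis unfolding G1_def using fmono_aux[OF k cb] by simp
qed

lemma sin_t0_pos: "sin t0 > 0" using t0 by (intro sin_gt_zero) auto

lemma sin_ge: assumes "t0 \<le> a" "a \<le> pi/2" shows "sin t0 \<le> sin a"
  using assms t0 by (intro sin_monotone_2pi_le) auto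

lemma g1_antimono: assumes "t0 \<le> a" "a \<le> b" "b \<le> pi/2" shows "g1 k t0 b \<le> g1 k t0 a"
proof -
  have sa: "sin a > 0" using sin_ge[of a] sin_t0_pos assms by simp
  have "sin a \<le> sin b" using assms t0 by (intro sin_monotone_2pi_le) auto
  thus ?thesis unfolding g1_def using G1_antimono[OF assms] G1_nonneg[of b] assms sa
    by (intro frac_le) auto
qed

lemma g1_bounds: assumes "t0 \<le> a" "a \<le> pi/2" shows "0 \<le> g1 k t0 a" "g1 k t0 a \<le> 1 / sin t0"
proof -
  have sa: "sin a > 0" "sin t0 \<le> sin a" using sin_ge[of a] sin_t0_pos assms by auto
  show "0 \<le> g1 k t0 a" unfolding g1_def using G1_nonneg[OF assms] sa by simp
  show "g1 k t0 a \<le> 1 / sin t0" unfolding g1_def using G1_nonneg[OF assms] G1_le1[OF assms] sa sin_t0_pos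
    by (intro frac_le) auto
qed

lemma g1_cont: "continuous_on {t0..pi/2} (g1 k t0)"
proof -
  have c: "\<And>a. a \<in> {t0..pi/2} \<Longrightarrow> cos (a - t0) \<noteq> 0"
  proof -
    fix a assume "a \<in> {t0..pi/2}"
    hence "0 < cos (a - t0)" using t0 by (intro cos_gt_zero_pi) auto
    thus "cos (a - t0) \<noteq> 0" by simp
  qed
  have s: "\<And>a. a \<in> {t0..pi/2} \<Longrightarrow> sin a \<noteq> 0" using sin_ge sin_t0_pos by force
  show ?thesis unfolding g1_def[abs_def] G1_def using c s
    by (intro continuous_intros) auto
qed

definition U where "U = 1 / sin t0"

lemma U_ge1: "U \<ge> 1" unfolding U_def using sin_t0_pos sin_le_one by simp

definition psi where "psi u = g1 k t0 (arcsin (1/u))"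

lemma arcsin_range: assumes "1 \<le> u" "u \<le> U" shows "t0 \<le> arcsin (1/u)" "arcsin (1/u) \<le> pi/2"
proof -
  have "sin t0 \<le> 1/u" using assms sin_t0_pos unfolding U_def by (simp add: field_simps)
  moreover have "1/u \<le> 1" using assms by simp
  ultimately have "arcsin (sin t0) \<le> arcsin (1/u)" using assms sin_t0_pos by (intro arcsin_le_arcsin) auto
  thus "t0 \<le> arcsin (1/u)" using t0 by (simp add: arcsin_sin)
  have "-1 \<le> 1/u" "1/u \<le> 1" using assms by (auto simp: field_simps)
  thus "arcsin (1/u) \<le> pi/2" by (intro arcsin_ubound) auto
qed

lemma psi_mono: assumes "1 \<le> a" "a \<le> b" "b \<le> U" shows "psi a \<le> psi b"
  unfolding psi_def
proof (rule g1_antimono)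
  show "t0 \<le> arcsin (1/b)" "arcsin (1/a) \<le> pi/2" using arcsin_range assms by auto
  show "arcsin (1/b) \<le> arcsin (1/a)" using assms by (intro arcsin_le_arcsin) (auto simp: field_simps)
qed

lemma psi_bounds: assumes "1 \<le> a" "a \<le> U" shows "0 \<le> psi a" "psi a \<le> U"
  unfolding psi_def U_def using g1_bounds arcsin_range[OF assms] by auto

lemma psi_cont: "continuous_on {1..U} psi"
  unfolding psi_def[abs_def]
proof (rule continuous_on_compose2[OF g1_cont])
  have "\<And>x. x \<in> {1..U} \<Longrightarrow> -1 \<le> 1/x \<and> 1/x \<le> 1" by (auto simp: field_simps)
  thus "continuous_on {1..U} (\<lambda>x. arcsin (1 / x))" by (auto intro!: continuous_intros)
  show "(\<lambda>x. arcsin (1 / x)) ` {1..U} \<subseteq> {t0..pi / 2}" using arcsin_range by auto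
qed

lemma sin_arcsin_inv: assumes "1 \<le> u" shows "sin (arcsin (1/u)) = 1/u"
proof -
  have "-1 \<le> 1/u" "1/u \<le> 1" using assms by (auto simp: field_simps)
  thus ?thesis by (intro sin_arcsin) auto
qed

lemma psi_sin: assumes "t0 \<le> a" "a \<le> pi/2" shows "psi (1 / sin a) = g1 k t0 a"
  unfolding psi_def using assms t0 by (simp add: arcsin_sin)

lemma inv_sin_range: assumes "t0 \<le> a" "a \<le> pi/2" shows "1 \<le> 1 / sin a" "1 / sin a \<le> U"
proof -
  have sa: "sin a > 0" "sin t0 \<le> sin a" using sin_ge[of a] sin_t0_pos assms by auto
  show "1 \<le> 1 / sin a" using sa sin_le_one[of a] by simp
  show "1 / sin a \<le> U" unfolding U_def using sa sin_t0_pos by (intro frac_le) auto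
qed

end



lemma dc_set:
  fixes P :: "nat \<Rightarrow> bool"
  assumes dc: "\<And>j k. 1 \<le> j \<Longrightarrow> j \<le> k \<Longrightarrow> k \<le> K \<Longrightarrow> P k \<Longrightarrow> P j"
  shows "{k\<in>{1..K}. P k} = {1..card {k\<in>{1..K}. P k}}" "card {k\<in>{1..K}. P k} \<le> K"
proof -
  define S where "S = {k\<in>{1..K}. P k}"
  have fin: "finite S" unfolding S_def by simp
  have "S = {1..card S}"
  proof (cases "S = {}")
    case True thus ?thesis by simp
  next
    case False
    define m where "m = Max S"
    have mS: "m \<in> S" unfolding m_def using fin False by (rule Max_in)
    have "S = {1..m}"
    proof
      show "S \<subseteq> {1..m}" using fin unfolding m_def by (auto simp: S_def)
      show "{1..m} \<subseteq> S" using mS dc unfolding S_def by auto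
    qed
    thus ?thesis by simp
  qed
  thus "{k\<in>{1..K}. P k} = {1..card {k\<in>{1..K}. P k}}" unfolding S_def .
  have "card S \<le> card {1..K}" unfolding S_def by (intro card_mono) auto
  thus "card {k\<in>{1..K}. P k} \<le> K" unfolding S_def by simp
qed

lemma tele: fixes m :: nat and f :: "nat \<Rightarrow> real" shows "(\<Sum>k\<in>{1..m}. f k - f (k - 1)) = f m - (f 0 :: real)"
proof (induction m)
  case 0 thus ?case by simp
next
  case (Suc m)
  have "{1..Suc m} = insert (Suc m) {1..m}" by auto
  thus ?case using Suc by simp
qed

lemma layer:
  fixes P :: "nat \<Rightarrow> bool" and f :: "nat \<Rightarrow> real"
  assumes dc: "\<And>j k. 1 \<le> j \<Longrightarrow> j \<le> k \<Longrightarrow> k \<le> K \<Longrightarrow> P k \<Longrightarrow> P j"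
  shows "f (card {k\<in>{1..K}. P k}) = f 0 + (\<Sum>k\<in>{1..K}. if P k then f k - f (k - 1) else 0)"
proof -
  define m where "m = card {k\<in>{1..K}. P k}"
  have S: "{k\<in>{1..K}. P k} = {1..m}" "m \<le> K" using dc_set[OF dc] unfolding m_def by auto
  have "(\<Sum>k\<in>{1..K}. if P k then f k - f (k - 1) else 0) = (\<Sum>k\<in>{1..K}. if k \<in> {1..m} then f k - f (k - 1) else 0)"
    using S(1) by (intro sum.cong) (auto simp: set_eq_iff)
  also have "\<dots> = (\<Sum>k\<in>{1..K} \<inter> {1..m}. f k - f (k - 1))"
    by (rule sum.inter_restrict[symmetric]) simp
  also have "{1..K} \<inter> {1..m} = {1..m}" using S(2) by auto
  also have "(\<Sum>k\<in>{1..m}. f k - f (k - 1)) = f m - f 0" by (rule tele)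
  finally show ?thesis unfolding m_def by simp
qed

lemma int_bnd:
  fixes f :: "real \<Rightarrow> real"
  assumes f: "f \<in> borel_measurable lborel" and A: "A \<in> sets lborel" "A \<subseteq> {a..b}"
    and bd: "\<And>y. y \<in> A \<Longrightarrow> \<bar>f y\<bar> \<le> Bd"
  shows "integrable lborel (\<lambda>y. indicator A y * f y)"
proof (rule integrableI_bounded_set[where A=A and B=Bd])
  show "A \<in> sets lborel" by fact
  show "(\<lambda>y. indicator A y * f y) \<in> borel_measurable lborel" using f A by measurable
  have "emeasure lborel A \<le> emeasure lborel {a..b}" using A by (intro emeasure_mono) auto
  also have "\<dots> < \<infinity>" by (simp add: emeasure_lborel_Icc_eq)
  finally show "emeasure lborel A < \<infinity>" .
  show "AE x in lborel. x \<in> A \<longrightarrow> norm (indicator A x * f x) \<le> Bd" using bd by auto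
  show "AE x in lborel. x \<notin> A \<longrightarrow> indicator A x * f x = 0" by auto
qed

lemma int_ind:
  assumes A: "A \<in> sets lborel" "A \<subseteq> {a..b}"
  shows "integrable lborel (indicator A :: real \<Rightarrow> real)"
  using int_bnd[OF borel_measurable_const A, of 1 1] by simp

lemma ts:
  fixes Ic :: "real \<Rightarrow> real"
  assumes Ic: "mono Ic" "\<And>y. 0 \<le> Ic y" "\<And>y. Ic y \<le> 1"
    and B: "B \<in> sets lborel" "B \<subseteq> {0..h}" and a: "0 \<le> a" "a \<le> h"
    and mB: "measure lborel B = h - a"
  shows "integral\<^sup>L lborel (\<lambda>y. indicator B y * Ic y) \<le> integral\<^sup>L lborel (\<lambda>y. indicator {a..h} y * Ic y)"
proof -
  have Im: "Ic \<in> borel_measurable lborel" using borel_measurable_mono[OF Ic(1)] by simp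
  have C: "{a..h} \<in> sets lborel" "{a..h} \<subseteq> {0..h}" using a by auto
  have iB: "integrable lborel (\<lambda>y. indicator B y * Ic y)" using int_bnd[OF Im B, of 1] Ic by auto
  have iC: "integrable lborel (\<lambda>y. indicator {a..h} y * Ic y)" using int_bnd[OF Im C, of 1] Ic by auto
  have iB1: "integrable lborel (indicator B :: real \<Rightarrow> real)" using int_ind[OF B] .
  have iC1: "integrable lborel (indicator {a..h} :: real \<Rightarrow> real)" using int_ind[OF C] .
  have ptw: "Ic a * (indicator {a..h} y - indicator B y) \<le> indicator {a..h} y * Ic y - indicator B y * Ic y" for y
  proof (cases "y \<in> B")
    case True
    show ?thesis
    proof (cases "y \<in> {a..h}")
      case True thus ?thesis using \<open>y \<in> B\<close> by simp
    next
      case False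
      hence "y \<le> a" using True B by auto
      hence "Ic y \<le> Ic a" by (rule monoD[OF Ic(1)])
      thus ?thesis using False True by simp
    qed
  next
    case False
    show ?thesis
    proof (cases "y \<in> {a..h}")
      case True
      hence "Ic a \<le> Ic y" using Ic(1) by (auto intro: monoD)
      thus ?thesis using False True by simp
    qed (use False in simp)
  qed
  have "integral\<^sup>L lborel (\<lambda>y. Ic a * (indicator {a..h} y - indicator B y)) = Ic a * (measure lborel {a..h} - measure lborel B)"
    using iB1 iC1 by simp
  also have "\<dots> = 0" using mB a by simp
  finally have z: "integral\<^sup>L lborel (\<lambda>y. Ic a * (indicator {a..h} y - indicator B y)) = 0" .
  have "integral\<^sup>L lborel (\<lambda>y. Ic a * (indicator {a..h} y - indicator B y)) \<le> integral\<^sup>L lborel (\<lambda>y. indicator {a..h} y * Ic y - indicator B y * Ic y)"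
    using ptw iB iC iB1 iC1 by (intro integral_mono) auto
  also have "\<dots> = integral\<^sup>L lborel (\<lambda>y. indicator {a..h} y * Ic y) - integral\<^sup>L lborel (\<lambda>y. indicator B y * Ic y)"
    using iB iC by simp
  finally show ?thesis using z by linarith
qed

lemma rc_step: fixes x m c :: real shows "continuous (at_right x) (\<lambda>y. if m \<le> y then c else (0::real))"
  unfolding continuous_within
proof (rule tendsto_eventually)
  show "\<forall>\<^sub>F y in at_right x. (if m \<le> y then c else 0) = (if m \<le> x then c else 0)"
  proof (cases "m \<le> x")
    case True
    thus ?thesis unfolding eventually_at_right_field by (intro exI[of _ "x+1"]) auto
  next
    case False
    thus ?thesis unfolding eventually_at_right_field by (intro exI[of _ m]) auto
  qed
qed




lemma int_lin:
  fixes f :: "real \<Rightarrow> real" and g :: "nat \<Rightarrow> real \<Rightarrow> real"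
  assumes f: "integrable lborel f" and g: "\<And>k. integrable lborel (g k)"
  shows "integral\<^sup>L lborel (\<lambda>y. f y + (\<Sum>k\<in>S. b k * g k y)) = integral\<^sup>L lborel f + (\<Sum>k\<in>S. b k * integral\<^sup>L lborel (g k))"
proof -
  have ig: "\<And>k. integrable lborel (\<lambda>y. b k * g k y)" using g by (intro integrable_mult_right) auto
  have "integral\<^sup>L lborel (\<lambda>y. f y + (\<Sum>k\<in>S. b k * g k y)) = integral\<^sup>L lborel f + integral\<^sup>L lborel (\<lambda>y. \<Sum>k\<in>S. b k * g k y)"
    by (rule Bochner_Integration.integral_add[OF f]) (rule Bochner_Integration.integrable_sum[OF ig])
  also have "integral\<^sup>L lborel (\<lambda>y. \<Sum>k\<in>S. b k * g k y) = (\<Sum>k\<in>S. integral\<^sup>L lborel (\<lambda>y. b k * g k y))"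
    by (rule Bochner_Integration.integral_sum[OF ig])
  also have "\<dots> = (\<Sum>k\<in>S. b k * integral\<^sup>L lborel (g k))"
    by (simp only: integral_mult_right_zero)
  finally show ?thesis .
qed

context stem begin

definition psic where "psic x = psi (max 1 (min U x))"

lemma psic_cont: "continuous_on UNIV psic"
  unfolding psic_def[abs_def]
  by (rule continuous_on_compose2[OF psi_cont]) (auto intro!: continuous_intros simp: U_ge1)

lemma psic_eq: "1 \<le> x \<Longrightarrow> x \<le> U \<Longrightarrow> psic x = psi x"
  unfolding psic_def by simp

lemma psi_meas:
  assumes "f \<in> borel_measurable lborel" "\<And>y. 1 \<le> f y" "\<And>y. f y \<le> U"
  shows "(\<lambda>y. psi (f y)) \<in> borel_measurable lborel"
proof -
  have "(\<lambda>y. psic (f y)) \<in> borel_measurable lborel"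
    by (rule borel_measurable_continuous_on[OF psic_cont assms(1)])
  moreover have "(\<lambda>y. psic (f y)) = (\<lambda>y. psi (f y))" using assms psic_eq by auto
  ultimately show ?thesis by simp
qed

lemma discretize:
  fixes Ic u :: "real \<Rightarrow> real" and h \<epsilon> :: real
  assumes Ic: "mono Ic" "\<And>y. 0 \<le> Ic y" "\<And>y. Ic y \<le> 1"
    and u: "u \<in> borel_measurable lborel" "\<And>y. 1 \<le> u y" "\<And>y. u y \<le> U"
    and h: "h > 0" and e: "\<epsilon> > 0"
  shows "\<exists>v. mono v \<and> (\<forall>x. continuous (at_right x) v) \<and> (\<forall>y. 1 \<le> v y \<and> v y \<le> U) \<and>
    \<bar>integral\<^sup>L lborel (\<lambda>y. indicator {0..h} y * v y) - integral\<^sup>L lborel (\<lambda>y. indicator {0..h} y * u y)\<bar> \<le> \<epsilon> \<and>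
    integral\<^sup>L lborel (\<lambda>y. indicator {0..h} y * (Ic y * psi (u y))) - \<epsilon>
      \<le> integral\<^sup>L lborel (\<lambda>y. indicator {0..h} y * (Ic y * psi (v y)))"
proof -
  have Im[measurable]: "Ic \<in> borel_measurable lborel" using borel_measurable_mono[OF Ic(1)] by simp
  have um[measurable]: "u \<in> borel_measurable lborel" by (rule u(1))
  have "uniformly_continuous_on {1..U} psi" by (rule compact_uniformly_continuous[OF psi_cont]) simp
  moreover have eh: "\<epsilon> / (h+1) > 0" using e h by simp
  ultimately obtain d0 where d0: "d0 > 0" and
    d0'': "\<forall>x\<in>{1..U}. \<forall>x'\<in>{1..U}. dist x' x < d0 \<longrightarrow> dist (psi x') (psi x) < \<epsilon> / (h+1)"
    unfolding uniformly_continuous_on_def by blast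
  have d0': "\<And>a b. a \<in> {1..U} \<Longrightarrow> b \<in> {1..U} \<Longrightarrow> \<bar>a - b\<bar> < d0 \<Longrightarrow> \<bar>psi a - psi b\<bar> < \<epsilon> / (h+1)"
    using d0'' unfolding dist_real_def by blast
  define \<eta> where "\<eta> = min d0 (\<epsilon> / (h+1))"
  have eta: "\<eta> > 0" unfolding \<eta>_def using d0 e h by simp
  define K where "K = nat \<lceil>(U - 1) / \<eta>\<rceil> + 1"
  have K0: "K > 0" unfolding K_def by simp
  have "(U - 1) / \<eta> < real K" unfolding K_def by linarith
  hence KU: "U - 1 < real K * \<eta>" using eta by (simp add: field_simps)
  define \<delta> where "\<delta> = (U - 1) / K"
  have del0: "\<delta> \<ge> 0" unfolding \<delta>_def using U_ge1 by simp
  have del_eta: "\<delta> < \<eta>" unfolding \<delta>_def using KU K0 by (simp add: field_simps)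
  have del_d0: "\<delta> < d0" using del_eta unfolding \<eta>_def by simp
  have del_h: "\<delta> * h \<le> \<epsilon>"
  proof -
    have "\<delta> * h \<le> \<delta> * (h + 1)" using del0 by (simp add: mult_left_mono)
    also have "\<dots> \<le> \<eta> * (h+1)" using del_eta h by (intro mult_right_mono) auto
    also have "\<dots> \<le> \<epsilon>/(h+1) * (h+1)" unfolding \<eta>_def using h by (intro mult_right_mono) auto
    also have "\<dots> = \<epsilon>" using h by simp
    finally show ?thesis .
  qed
  define t where "t j = 1 + real j * \<delta>" for j :: nat
  have tK: "t K = U" unfolding t_def \<delta>_def using K0 by simp
  have t_mono: "\<And>i j. i \<le> j \<Longrightarrow> t i \<le> t j" unfolding t_def using del0 by (simp add: mult_right_mono)
  have t_range: "\<And>j. j \<le> K \<Longrightarrow> 1 \<le> t j \<and> t j \<le> U" using t_mono[of _ K] tK del0 unfolding t_def by auto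
  define B where "B j = {y\<in>{0..h}. t j \<le> u y}" for j
  have Bm: "B j \<in> sets lborel" for j
  proof -
    have "B j = {0..h} \<inter> {y \<in> space lborel. t j \<le> u y}" unfolding B_def by auto
    also have "\<dots> \<in> sets lborel" by (intro sets.Int) (auto intro!: borel_measurable_le measurable_const)
    finally show ?thesis .
  qed
  have Bs: "B j \<subseteq> {0..h}" for j unfolding B_def by auto
  have B_anti: "i \<le> j \<Longrightarrow> B j \<subseteq> B i" for i j unfolding B_def using t_mono[of i j] by auto
  have Hfm: "{0..h} \<in> fmeasurable lborel"
    by (rule fmeasurableI) (simp_all add: emeasure_lborel_Icc_eq)
  have Bfm: "B j \<in> fmeasurable lborel" for j
    by (rule fmeasurableI2[OF Hfm Bs Bm])
  have mB: "0 \<le> measure lborel (B j) \<and> measure lborel (B j) \<le> h" for j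
  proof -
    have "measure lborel (B j) \<le> measure lborel {0..h}"
      by (rule measure_mono_fmeasurable[OF Bs Bm Hfm])
    thus ?thesis using h by simp
  qed
  define M where "M j = h - measure lborel (B j)" for j
  have M_range: "0 \<le> M j \<and> M j \<le> h" for j unfolding M_def using mB[of j] by simp
  have M_mono: "i \<le> j \<Longrightarrow> M i \<le> M j" for i j
  proof -
    assume "i \<le> j"
    hence "measure lborel (B j) \<le> measure lborel (B i)"
      by (rule measure_mono_fmeasurable[OF B_anti Bm Bfm])
    thus ?thesis unfolding M_def by simp
  qed
  define n where "n y = card {k\<in>{1..K}. t k \<le> u y}" for y
  define N where "N y = card {k\<in>{1..K}. M k \<le> y}" for y
  define q where "q y = t (n y)" for y
  define v where "v y = t (N y)" for y
  have dc1: "\<And>j k. 1 \<le> j \<Longrightarrow> j \<le> k \<Longrightarrow> k \<le> K \<Longrightarrow> t k \<le> u y \<Longrightarrow> t j \<le> u y" for y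
    using t_mono by (meson order_trans)
  have dc2: "\<And>j k. 1 \<le> j \<Longrightarrow> j \<le> k \<Longrightarrow> k \<le> K \<Longrightarrow> M k \<le> y \<Longrightarrow> M j \<le> y" for y
    using M_mono by (meson order_trans)
  define c where "c k = psi (t k) - psi (t (k - 1))" for k
  have c0: "k \<in> {1..K} \<Longrightarrow> 0 \<le> c k" for k
    unfolding c_def using t_range[of k] t_range[of "k-1"] t_mono[of "k-1" k] by (auto intro!: psi_mono)
  have td: "k \<in> {1..K} \<Longrightarrow> t k - t (k - 1) = \<delta>" for k
    unfolding t_def by (auto simp: of_nat_diff algebra_simps)
  have t0': "t 0 = 1" unfolding t_def by simp
  have L1: "v y = 1 + (\<Sum>k\<in>{1..K}. if M k \<le> y then \<delta> else 0)" for y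
  proof -
    have "v y = t 0 + (\<Sum>k\<in>{1..K}. if M k \<le> y then t k - t (k - 1) else 0)"
      unfolding v_def N_def by (rule layer[OF dc2])
    also have "\<dots> = 1 + (\<Sum>k\<in>{1..K}. if M k \<le> y then \<delta> else 0)"
      using td t0' by (auto intro!: sum.cong)
    finally show ?thesis .
  qed
  have L2: "q y = 1 + (\<Sum>k\<in>{1..K}. if t k \<le> u y then \<delta> else 0)" for y
  proof -
    have "q y = t 0 + (\<Sum>k\<in>{1..K}. if t k \<le> u y then t k - t (k - 1) else 0)"
      unfolding q_def n_def by (rule layer[OF dc1])
    also have "\<dots> = 1 + (\<Sum>k\<in>{1..K}. if t k \<le> u y then \<delta> else 0)"
      using td t0' by (auto intro!: sum.cong)
    finally show ?thesis .
  qed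
  have L3: "psi (v y) = psi 1 + (\<Sum>k\<in>{1..K}. if M k \<le> y then c k else 0)" for y
  proof -
    have "psi (v y) = psi (t 0) + (\<Sum>k\<in>{1..K}. if M k \<le> y then psi (t k) - psi (t (k - 1)) else 0)"
      unfolding v_def N_def by (rule layer[OF dc2, where f="\<lambda>j. psi (t j)"])
    thus ?thesis unfolding c_def t0' .
  qed
  have L4: "psi (q y) = psi 1 + (\<Sum>k\<in>{1..K}. if t k \<le> u y then c k else 0)" for y
  proof -
    have "psi (q y) = psi (t 0) + (\<Sum>k\<in>{1..K}. if t k \<le> u y then psi (t k) - psi (t (k - 1)) else 0)"
      unfolding q_def n_def by (rule layer[OF dc1, where f="\<lambda>j. psi (t j)"])
    thus ?thesis unfolding c_def t0' .
  qed
  have Nle: "N y \<le> K" for y unfolding N_def using dc_set(2)[OF dc2] .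
  have nle: "n y \<le> K" for y unfolding n_def using dc_set(2)[OF dc1] .
  have v_range: "1 \<le> v y \<and> v y \<le> U" for y unfolding v_def using t_range[OF Nle] .
  have q_range: "1 \<le> q y \<and> q y \<le> U" for y unfolding q_def using t_range[OF nle] .
  have q_u: "q y \<le> u y \<and> u y - \<delta> \<le> q y" for y
  proof -
    define m where "m = n y"
    have S: "{k\<in>{1..K}. t k \<le> u y} = {1..m}" unfolding m_def n_def using dc_set(1)[OF dc1] .
    have "q y \<le> u y"
    proof (cases "m = 0")
      case True thus ?thesis unfolding q_def m_def[symmetric] using t0' u(2) by simp
    next
      case False
      hence "m \<in> {k\<in>{1..K}. t k \<le> u y}" unfolding S by simp
      thus ?thesis unfolding q_def m_def[symmetric] by simp
    qed
    moreover have "u y - \<delta> \<le> q y"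
    proof (cases "m < K")
      case True
      hence "Suc m \<notin> {k\<in>{1..K}. t k \<le> u y}" unfolding S by simp
      hence "u y < t (Suc m)" using True by auto
      thus ?thesis unfolding q_def m_def[symmetric] t_def by (simp add: algebra_simps)
    next
      case False
      hence "m = K" using nle[of y] unfolding m_def by simp
      thus ?thesis unfolding q_def m_def[symmetric] using tK u(3)[of y] del0 by simp
    qed
    ultimately show ?thesis by simp
  qed
  have v_mono: "mono v"
  proof (rule monoI)
    fix x y :: real assume "x \<le> y"
    thus "v x \<le> v y" unfolding L1 using del0 by (intro add_left_mono sum_mono) auto
  qed
  have v_rc: "continuous (at_right x) v" for x
  proof -
    have "v = (\<lambda>y. 1 + (\<Sum>k\<in>{1..K}. if M k \<le> y then \<delta> else 0))" by (rule ext) (rule L1)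
    thus ?thesis by (simp only:) (intro continuous_add continuous_const continuous_sum rc_step)
  qed
  have qm: "q \<in> borel_measurable lborel"
  proof -
    have "q = (\<lambda>y. 1 + (\<Sum>k\<in>{1..K}. if t k \<le> u y then \<delta> else 0))" by (rule ext) (rule L2)
    moreover have "(\<lambda>y. 1 + (\<Sum>k\<in>{1..K}. if t k \<le> u y then \<delta> else 0)) \<in> borel_measurable lborel"
      by measurable
    ultimately show ?thesis by simp
  qed
  have vm: "v \<in> borel_measurable lborel" using borel_measurable_mono[OF v_mono] by simp
  have H: "{0..h} \<in> sets lborel" "{0..h} \<subseteq> {0..h}" by auto
  have iu: "integrable lborel (\<lambda>y. indicator {0..h} y * u y)"
  proof (rule int_bnd[OF u(1) H])
    fix y show "\<bar>u y\<bar> \<le> U" using u(2,3)[of y] by simp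
  qed
  have iq: "integrable lborel (\<lambda>y. indicator {0..h} y * q y)"
  proof (rule int_bnd[OF qm H])
    fix y show "\<bar>q y\<bar> \<le> U" using q_range[of y] by simp
  qed
  have iH: "integrable lborel (indicator {0..h} :: real \<Rightarrow> real)" using int_ind[OF H] .
  have iB: "integrable lborel (indicator (B k) :: real \<Rightarrow> real)" for k using int_ind[OF Bm Bs] .
  have iMh: "integrable lborel (indicator {M k..h} :: real \<Rightarrow> real)" for k
    using int_ind[of "{M k..h}" 0 h] M_range by auto
  have eq_q: "(\<lambda>y. indicator {0..h} y * q y) = (\<lambda>y. indicator {0..h} y + (\<Sum>k\<in>{1..K}. \<delta> * indicator (B k) y))"
  proof (rule ext)
    fix y
    have "indicator {0..h} y * q y = indicator {0..h} y + (\<Sum>k\<in>{1..K}. indicator {0..h} y * (if t k \<le> u y then \<delta> else 0))"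
      unfolding L2 by (simp add: distrib_left sum_distrib_left)
    also have "\<dots> = indicator {0..h} y + (\<Sum>k\<in>{1..K}. \<delta> * indicator (B k) y)"
      by (intro arg_cong2[where f="(+)"] refl sum.cong) (auto simp: B_def indicator_def)
    finally show "indicator {0..h} y * q y = indicator {0..h} y + (\<Sum>k\<in>{1..K}. \<delta> * indicator (B k) y)" .
  qed
  have eq_v: "(\<lambda>y. indicator {0..h} y * v y) = (\<lambda>y. indicator {0..h} y + (\<Sum>k\<in>{1..K}. \<delta> * indicator {M k..h} y))"
  proof (rule ext)
    fix y
    show "indicator {0..h} y * v y = indicator {0..h} y + (\<Sum>k\<in>{1..K}. \<delta> * indicator {M k..h} y)"
    proof (cases "y \<in> {0..h}")
      case True
      have "indicator {0..h} y * v y = 1 + (\<Sum>k\<in>{1..K}. if M k \<le> y then \<delta> else 0)"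
        using True unfolding L1 by simp
      also have "\<dots> = indicator {0..h} y + (\<Sum>k\<in>{1..K}. \<delta> * indicator {M k..h} y)"
        using True by (intro arg_cong2[where f="(+)"] sum.cong) (auto simp: indicator_def)
      finally show ?thesis .
    next
      case False
      have "\<And>k. y \<notin> {M k..h}"
      proof -
        fix k have "0 \<le> M k" using M_range[of k] by simp
        thus "y \<notin> {M k..h}" using False by auto
      qed
      thus ?thesis using False by simp
    qed
  qed
  have int_q: "integral\<^sup>L lborel (\<lambda>y. indicator {0..h} y * q y) = h + (\<Sum>k\<in>{1..K}. \<delta> * measure lborel (B k))"
  proof -
    have "integral\<^sup>L lborel (\<lambda>y. indicator {0..h} y * q y) = integral\<^sup>L lborel (indicator {0..h}) + (\<Sum>k\<in>{1..K}. \<delta> * integral\<^sup>L lborel (indicator (B k)))"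
      unfolding eq_q by (rule int_lin[where f="indicator {0..h}" and g="\<lambda>k. indicator (B k)", OF iH iB])
    also have "integral\<^sup>L lborel (indicator {0..h} :: real \<Rightarrow> real) = h" using h by simp
    also have "(\<Sum>k\<in>{1..K}. \<delta> * integral\<^sup>L lborel (indicator (B k) :: real \<Rightarrow> real)) = (\<Sum>k\<in>{1..K}. \<delta> * measure lborel (B k))"
      by (simp only: Bochner_Integration.integral_indicator space_lborel space_borel Int_UNIV_right)
    finally show ?thesis .
  qed
  have int_v: "integral\<^sup>L lborel (\<lambda>y. indicator {0..h} y * v y) = h + (\<Sum>k\<in>{1..K}. \<delta> * (h - M k))"
  proof -
    have "integral\<^sup>L lborel (\<lambda>y. indicator {0..h} y * v y) = integral\<^sup>L lborel (indicator {0..h}) + (\<Sum>k\<in>{1..K}. \<delta> * integral\<^sup>L lborel (indicator {M k..h}))"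
      unfolding eq_v by (rule int_lin[where f="indicator {0..h}" and g="\<lambda>k. indicator {M k..h}", OF iH iMh])
    also have "integral\<^sup>L lborel (indicator {0..h} :: real \<Rightarrow> real) = h" using h by simp
    also have "(\<Sum>k\<in>{1..K}. \<delta> * integral\<^sup>L lborel (indicator {M k..h} :: real \<Rightarrow> real)) = (\<Sum>k\<in>{1..K}. \<delta> * (h - M k))"
    proof (intro sum.cong refl)
      fix k have "integral\<^sup>L lborel (indicator {M k..h} :: real \<Rightarrow> real) = h - M k" using M_range[of k] by simp
      thus "\<delta> * integral\<^sup>L lborel (indicator {M k..h} :: real \<Rightarrow> real) = \<delta> * (h - M k)" by simp
    qed
    finally show ?thesis .
  qed
  have int_vq: "integral\<^sup>L lborel (\<lambda>y. indicator {0..h} y * v y) = integral\<^sup>L lborel (\<lambda>y. indicator {0..h} y * q y)"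
    unfolding int_v int_q M_def by simp
  have uq1: "integral\<^sup>L lborel (\<lambda>y. indicator {0..h} y * q y) \<le> integral\<^sup>L lborel (\<lambda>y. indicator {0..h} y * u y)"
  proof (rule integral_mono[OF iq iu])
    fix y show "indicator {0..h} y * q y \<le> indicator {0..h} y * u y"
      using q_u[of y] by (auto simp: indicator_def)
  qed
  have uq2: "integral\<^sup>L lborel (\<lambda>y. indicator {0..h} y * u y) \<le> integral\<^sup>L lborel (\<lambda>y. indicator {0..h} y * q y + \<delta> * indicator {0..h} y)"
  proof (rule integral_mono[OF iu])
    show "integrable lborel (\<lambda>y. indicator {0..h} y * q y + \<delta> * indicator {0..h} y)"
      by (intro Bochner_Integration.integrable_add iq integrable_mult_right iH)
    fix y show "indicator {0..h} y * u y \<le> indicator {0..h} y * q y + \<delta> * indicator {0..h} y"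
      using q_u[of y] by (auto simp: indicator_def)
  qed
  also have "\<dots> = integral\<^sup>L lborel (\<lambda>y. indicator {0..h} y * q y) + \<delta> * h"
    using iq iH h by simp
  finally have uq2': "integral\<^sup>L lborel (\<lambda>y. indicator {0..h} y * u y) \<le> integral\<^sup>L lborel (\<lambda>y. indicator {0..h} y * q y) + \<epsilon>"
    using del_h by (simp add: mult.commute)
  have part1: "\<bar>integral\<^sup>L lborel (\<lambda>y. indicator {0..h} y * v y) - integral\<^sup>L lborel (\<lambda>y. indicator {0..h} y * u y)\<bar> \<le> \<epsilon>"
    using int_vq uq1 uq2' e by linarith
  have iIB: "integrable lborel (\<lambda>y. indicator (B k) y * Ic y)" for k
  proof (rule int_bnd[OF Im Bm[of k] Bs[of k]])
    fix y show "\<bar>Ic y\<bar> \<le> 1" using Ic(2,3)[of y] by simp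
  qed
  have iIM: "integrable lborel (\<lambda>y. indicator {M k..h} y * Ic y)" for k
  proof (rule int_bnd[OF Im])
    show "{M k..h} \<in> sets lborel" by simp
    show "{M k..h} \<subseteq> {0..h}" using M_range[of k] by auto
    fix y show "\<bar>Ic y\<bar> \<le> 1" using Ic(2,3)[of y] by simp
  qed
  have iIH: "integrable lborel (\<lambda>y. indicator {0..h} y * Ic y)"
  proof (rule int_bnd[OF Im H])
    fix y show "\<bar>Ic y\<bar> \<le> 1" using Ic(2,3)[of y] by simp
  qed
  have eq_pq: "(\<lambda>y. indicator {0..h} y * (Ic y * psi (q y))) = (\<lambda>y. psi 1 * (indicator {0..h} y * Ic y) + (\<Sum>k\<in>{1..K}. c k * (indicator (B k) y * Ic y)))"
  proof (rule ext)
    fix y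
    have "indicator {0..h} y * (Ic y * psi (q y)) = psi 1 * (indicator {0..h} y * Ic y) + (\<Sum>k\<in>{1..K}. indicator {0..h} y * Ic y * (if t k \<le> u y then c k else 0))"
      unfolding L4 by (simp add: distrib_left sum_distrib_left mult.assoc mult.left_commute)
    also have "\<dots> = psi 1 * (indicator {0..h} y * Ic y) + (\<Sum>k\<in>{1..K}. c k * (indicator (B k) y * Ic y))"
      by (intro arg_cong2[where f="(+)"] refl sum.cong) (auto simp: B_def indicator_def)
    finally show "indicator {0..h} y * (Ic y * psi (q y)) = psi 1 * (indicator {0..h} y * Ic y) + (\<Sum>k\<in>{1..K}. c k * (indicator (B k) y * Ic y))" .
  qed
  have eq_pv: "(\<lambda>y. indicator {0..h} y * (Ic y * psi (v y))) = (\<lambda>y. psi 1 * (indicator {0..h} y * Ic y) + (\<Sum>k\<in>{1..K}. c k * (indicator {M k..h} y * Ic y)))"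
  proof (rule ext)
    fix y
    show "indicator {0..h} y * (Ic y * psi (v y)) = psi 1 * (indicator {0..h} y * Ic y) + (\<Sum>k\<in>{1..K}. c k * (indicator {M k..h} y * Ic y))"
    proof (cases "y \<in> {0..h}")
      case True
      have "indicator {0..h} y * (Ic y * psi (v y)) = psi 1 * (indicator {0..h} y * Ic y) + (\<Sum>k\<in>{1..K}. Ic y * (if M k \<le> y then c k else 0))"
        using True unfolding L3 by (simp add: distrib_left sum_distrib_left)
      also have "\<dots> = psi 1 * (indicator {0..h} y * Ic y) + (\<Sum>k\<in>{1..K}. c k * (indicator {M k..h} y * Ic y))"
        using True by (intro arg_cong2[where f="(+)"] refl sum.cong) (auto simp: indicator_def)
      finally show ?thesis .
    next
      case False
      have "\<And>k. y \<notin> {M k..h}"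
      proof -
        fix k have "0 \<le> M k" using M_range[of k] by simp
        thus "y \<notin> {M k..h}" using False by auto
      qed
      thus ?thesis using False by simp
    qed
  qed
  have int_pq: "integral\<^sup>L lborel (\<lambda>y. indicator {0..h} y * (Ic y * psi (q y))) = psi 1 * integral\<^sup>L lborel (\<lambda>y. indicator {0..h} y * Ic y) + (\<Sum>k\<in>{1..K}. c k * integral\<^sup>L lborel (\<lambda>y. indicator (B k) y * Ic y))"
    unfolding eq_pq using int_lin[where f="\<lambda>y. psi 1 * (indicator {0..h} y * Ic y)" and g="\<lambda>k y. indicator (B k) y * Ic y" and b=c and S="{1..K}"] iIH iIB
    by (simp only: integral_mult_right_zero integrable_mult_right)
  have int_pv: "integral\<^sup>L lborel (\<lambda>y. indicator {0..h} y * (Ic y * psi (v y))) = psi 1 * integral\<^sup>L lborel (\<lambda>y. indicator {0..h} y * Ic y) + (\<Sum>k\<in>{1..K}. c k * integral\<^sup>L lborel (\<lambda>y. indicator {M k..h} y * Ic y))"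
    unfolding eq_pv using int_lin[where f="\<lambda>y. psi 1 * (indicator {0..h} y * Ic y)" and g="\<lambda>k y. indicator {M k..h} y * Ic y" and b=c and S="{1..K}"] iIH iIM
    by (simp only: integral_mult_right_zero integrable_mult_right)
  have cmp: "integral\<^sup>L lborel (\<lambda>y. indicator (B k) y * Ic y) \<le> integral\<^sup>L lborel (\<lambda>y. indicator {M k..h} y * Ic y)" for k
    using M_range[of k] mB[of k] by (intro ts[OF Ic Bm Bs]) (auto simp: M_def)
  have qv: "integral\<^sup>L lborel (\<lambda>y. indicator {0..h} y * (Ic y * psi (q y))) \<le> integral\<^sup>L lborel (\<lambda>y. indicator {0..h} y * (Ic y * psi (v y)))"
    unfolding int_pq int_pv using cmp c0 by (intro add_left_mono sum_mono mult_left_mono) auto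
  have pum: "(\<lambda>y. psi (u y)) \<in> borel_measurable lborel" using psi_meas[OF u] .
  have pqm: "(\<lambda>y. psi (q y)) \<in> borel_measurable lborel" using psi_meas[OF qm] q_range by auto
  have iPu: "integrable lborel (\<lambda>y. indicator {0..h} y * (Ic y * psi (u y)))"
  proof (rule int_bnd[of "\<lambda>y. Ic y * psi (u y)" "{0..h}" 0 h U])
    show "(\<lambda>y. Ic y * psi (u y)) \<in> borel_measurable lborel" using Im pum by (rule borel_measurable_times)
    fix y have "0 \<le> psi (u y)" "psi (u y) \<le> U" using psi_bounds u(2,3) by auto
    hence "Ic y * psi (u y) \<le> 1 * U" "0 \<le> Ic y * psi (u y)" using Ic(2,3)[of y]
      by (intro mult_mono mult_nonneg_nonneg; simp)+
    thus "\<bar>Ic y * psi (u y)\<bar> \<le> U" by simp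
  qed auto
  have iPq: "integrable lborel (\<lambda>y. indicator {0..h} y * (Ic y * psi (q y)))"
  proof (rule int_bnd[of "\<lambda>y. Ic y * psi (q y)" "{0..h}" 0 h U])
    show "(\<lambda>y. Ic y * psi (q y)) \<in> borel_measurable lborel" using Im pqm by (rule borel_measurable_times)
    fix y have "0 \<le> psi (q y)" "psi (q y) \<le> U" using psi_bounds q_range by auto
    hence "Ic y * psi (q y) \<le> 1 * U" "0 \<le> Ic y * psi (q y)" using Ic(2,3)[of y]
      by (intro mult_mono mult_nonneg_nonneg; simp)+
    thus "\<bar>Ic y * psi (q y)\<bar> \<le> U" by simp
  qed auto
  have ptw: "indicator {0..h} y * (Ic y * psi (u y)) \<le> indicator {0..h} y * (Ic y * psi (q y)) + (\<epsilon>/(h+1)) * indicator {0..h} y" for y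
  proof -
    have "\<bar>psi (u y) - psi (q y)\<bar> < \<epsilon>/(h+1)"
      using q_u[of y] q_range[of y] u(2,3)[of y] del0 del_d0 by (intro d0') auto
    hence a: "psi (u y) \<le> psi (q y) + \<epsilon>/(h+1)" by simp
    have "Ic y * psi (u y) \<le> Ic y * (psi (q y) + \<epsilon>/(h+1))" by (rule mult_left_mono[OF a Ic(2)])
    also have "\<dots> = Ic y * psi (q y) + Ic y * (\<epsilon>/(h+1))" by (simp add: distrib_left)
    also have "Ic y * (\<epsilon>/(h+1)) \<le> 1 * (\<epsilon>/(h+1))" using Ic(3)[of y] eh by (intro mult_right_mono) auto
    finally have "Ic y * psi (u y) \<le> Ic y * psi (q y) + \<epsilon>/(h+1)" by simp
    thus ?thesis by (auto simp: indicator_def)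
  qed
  have "integral\<^sup>L lborel (\<lambda>y. indicator {0..h} y * (Ic y * psi (u y))) \<le> integral\<^sup>L lborel (\<lambda>y. indicator {0..h} y * (Ic y * psi (q y)) + (\<epsilon>/(h+1)) * indicator {0..h} y)"
  proof (rule integral_mono[OF iPu])
    show "integrable lborel (\<lambda>y. indicator {0..h} y * (Ic y * psi (q y)) + (\<epsilon>/(h+1)) * indicator {0..h} y)"
      by (intro Bochner_Integration.integrable_add iPq integrable_mult_right iH)
  qed (rule ptw)
  also have "\<dots> = integral\<^sup>L lborel (\<lambda>y. indicator {0..h} y * (Ic y * psi (q y))) + (\<epsilon>/(h+1)) * h"
    using iPq iH h by simp
  also have "(\<epsilon>/(h+1)) * h \<le> \<epsilon>" using e h by (simp add: field_simps)
  finally have part2: "integral\<^sup>L lborel (\<lambda>y. indicator {0..h} y * (Ic y * psi (u y))) - \<epsilon> \<le> integral\<^sup>L lborel (\<lambda>y. indicator {0..h} y * (Ic y * psi (v y)))"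
    using qv by linarith
  show ?thesis using v_mono v_rc v_range part1 part2 by blast
qed

end



lemma lint_conv: fixes f :: "real \<Rightarrow> real"
  shows "(LINT y:A|lborel. f y) = integral\<^sup>L lborel (\<lambda>y. indicator A y * f y)"
  unfolding set_lebesgue_integral_def by simp

context stem begin

lemma adm_facts:
  assumes adm: "admissible1 t0 len h \<theta>" and Ic: "\<And>y. 0 \<le> y \<Longrightarrow> Ic y = I y"
  shows "\<exists>u. u \<in> borel_measurable lborel \<and> (\<forall>y. 1 \<le> u y \<and> u y \<le> U) \<and>
     integral\<^sup>L lborel (\<lambda>y. indicator {0..h} y * u y) = len \<and>
     J1 k t0 I h \<theta> = integral\<^sup>L lborel (\<lambda>y. indicator {0..h} y * (Ic y * psi (u y)))"
proof -
  have h: "h > 0" and \<theta>m: "\<theta> \<in> borel_measurable (restrict_space lborel {0..h})"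
    and rng: "\<forall>y\<in>{0..h}. \<theta> y \<in> {t0..pi/2}" and eq: "(LINT y:{0..h}|lborel. 1 / sin (\<theta> y)) = len"
    using adm unfolding admissible1_def by auto
  define \<theta>' where "\<theta>' = (\<lambda>y. if y \<in> {0..h} then \<theta> y else t0)"
  have \<theta>'m: "\<theta>' \<in> borel_measurable lborel"
    using \<theta>m measurable_restrict_space_iff[of "{0..h}" lborel t0 borel \<theta>] unfolding \<theta>'_def by simp
  have rng': "t0 \<le> \<theta>' y \<and> \<theta>' y \<le> pi/2" for y using rng t0 unfolding \<theta>'_def by auto
  define u where "u = (\<lambda>y. 1 / sin (\<theta>' y))"
  have um: "u \<in> borel_measurable lborel" unfolding u_def using \<theta>'m by measurable
  have ur: "\<forall>y. 1 \<le> u y \<and> u y \<le> U" unfolding u_def using inv_sin_range rng' by auto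
  have "integral\<^sup>L lborel (\<lambda>y. indicator {0..h} y * u y) = (LINT y:{0..h}|lborel. 1 / sin (\<theta> y))"
    unfolding lint_conv u_def \<theta>'_def by (intro Bochner_Integration.integral_cong) (auto simp: indicator_def)
  hence i1: "integral\<^sup>L lborel (\<lambda>y. indicator {0..h} y * u y) = len" using eq by simp
  have "J1 k t0 I h \<theta> = integral\<^sup>L lborel (\<lambda>y. indicator {0..h} y * (Ic y * psi (u y)))"
    unfolding J1_def lint_conv
  proof (intro Bochner_Integration.integral_cong refl)
    fix y show "indicator {0..h} y * (I y * g1 k t0 (\<theta> y)) = indicator {0..h} y * (Ic y * psi (u y))"
    proof (cases "y \<in> {0..h}")
      case True
      hence "psi (u y) = g1 k t0 (\<theta> y)" unfolding u_def \<theta>'_def using rng by (auto intro: psi_sin)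
      thus ?thesis using True Ic[of y] by simp
    qed simp
  qed
  thus ?thesis using um ur i1 by blast
qed

lemma h_bounds:
  assumes u: "\<forall>y. 1 \<le> u y \<and> u y \<le> U" "u \<in> borel_measurable lborel" and h: "h > 0"
    and i: "integral\<^sup>L lborel (\<lambda>y. indicator {0..h} y * u y) = len"
  shows "h \<le> len" "len \<le> U * h"
proof -
  have H: "{0..h} \<in> sets lborel" "{0..h} \<subseteq> {0..h}" by auto
  have iu: "integrable lborel (\<lambda>y. indicator {0..h} y * u y)"
  proof (rule int_bnd[OF u(2) H])
    fix y show "\<bar>u y\<bar> \<le> U" using u(1) by (metis abs_of_nonneg order_trans zero_le_one)
  qed
  have iH: "integrable lborel (indicator {0..h} :: real \<Rightarrow> real)" using int_ind[OF H] .
  have "integral\<^sup>L lborel (indicator {0..h} :: real \<Rightarrow> real) \<le> integral\<^sup>L lborel (\<lambda>y. indicator {0..h} y * u y)"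
    using u(1) by (intro integral_mono[OF iH iu]) (auto simp: indicator_def)
  thus "h \<le> len" using i h by simp
  have "integral\<^sup>L lborel (\<lambda>y. indicator {0..h} y * u y) \<le> integral\<^sup>L lborel (\<lambda>y. U * indicator {0..h} y)"
    using u(1) by (intro integral_mono[OF iu] integrable_mult_right iH) (auto simp: indicator_def)
  thus "len \<le> U * h" using i h by simp
qed

lemma J_bound:
  assumes u: "\<forall>y. 1 \<le> u y \<and> u y \<le> U" "u \<in> borel_measurable lborel" and h: "h > 0" "h \<le> len"
    and Ic: "\<And>y. 0 \<le> Ic y" "\<And>y. Ic y \<le> 1" "Ic \<in> borel_measurable lborel"
  shows "integral\<^sup>L lborel (\<lambda>y. indicator {0..h} y * (Ic y * psi (u y))) \<le> U * len"
proof -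
  have H: "{0..h} \<in> sets lborel" "{0..h} \<subseteq> {0..h}" by auto
  have iH: "integrable lborel (indicator {0..h} :: real \<Rightarrow> real)" using int_ind[OF H] .
  have pum: "(\<lambda>y. psi (u y)) \<in> borel_measurable lborel" using psi_meas[OF u(2)] u(1) by auto
  have b: "0 \<le> Ic y * psi (u y) \<and> Ic y * psi (u y) \<le> U" for y
  proof -
    have "0 \<le> psi (u y)" "psi (u y) \<le> U" using psi_bounds u(1) by auto
    hence "Ic y * psi (u y) \<le> 1 * U" "0 \<le> Ic y * psi (u y)" using Ic(1,2)[of y]
      by (intro mult_mono mult_nonneg_nonneg; simp)+
    thus ?thesis by simp
  qed
  have ip: "integrable lborel (\<lambda>y. indicator {0..h} y * (Ic y * psi (u y)))"
  proof (rule int_bnd[OF _ H])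
    show "(\<lambda>y. Ic y * psi (u y)) \<in> borel_measurable lborel" using Ic(3) pum by (rule borel_measurable_times)
    fix y show "\<bar>Ic y * psi (u y)\<bar> \<le> U" using b[of y] by simp
  qed
  have "integral\<^sup>L lborel (\<lambda>y. indicator {0..h} y * (Ic y * psi (u y))) \<le> integral\<^sup>L lborel (\<lambda>y. U * indicator {0..h} y)"
    using b by (intro integral_mono[OF ip] integrable_mult_right iH) (auto simp: indicator_def)
  also have "\<dots> = U * h" using h by simp
  also have "\<dots> \<le> U * len" using h U_ge1 by simp
  finally show ?thesis .
qed

end



context stem begin

lemma limit_int:
  fixes hs :: "nat \<Rightarrow> real" and vs :: "nat \<Rightarrow> real \<Rightarrow> real" and F :: "real \<Rightarrow> real"
    and \<Phi> :: "real \<Rightarrow> real \<Rightarrow> real"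
  assumes hs: "hs \<longlonglongrightarrow> h" "\<And>n. 0 \<le> hs n \<and> hs n \<le> len"
    and vs: "\<And>n. mono (vs n)" "\<And>n y. 1 \<le> vs n y \<and> vs n y \<le> U"
    and F: "\<And>x. isCont F x \<Longrightarrow> (\<lambda>n. vs n x) \<longlonglongrightarrow> F x"
    and \<Phi>m: "\<And>g. g \<in> borel_measurable lborel \<Longrightarrow> (\<forall>y. 1 \<le> g y \<and> g y \<le> U) \<Longrightarrow> (\<lambda>y. \<Phi> y (g y)) \<in> borel_measurable lborel"
    and \<Phi>c: "\<And>y. continuous_on {1..U} (\<Phi> y)"
    and \<Phi>b: "\<And>y x. x \<in> {1..U} \<Longrightarrow> \<bar>\<Phi> y x\<bar> \<le> Bd"
    and Fm: "mono F"
  shows "(\<lambda>n. integral\<^sup>L lborel (\<lambda>y. indicator {0..hs n} y * \<Phi> y (vs n y)))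
     \<longlonglongrightarrow> integral\<^sup>L lborel (\<lambda>y. indicator {0..h} y * \<Phi> y (max 1 (min U (F y))))"
proof -
  define w where "w y = max 1 (min U (F y))" for y
  have wmono: "mono w"
  proof (rule monoI)
    fix x y :: real assume "x \<le> y"
    hence "F x \<le> F y" by (rule monoD[OF Fm])
    thus "w x \<le> w y" unfolding w_def by (auto simp: max_def min_def)
  qed
  have wm: "w \<in> borel_measurable lborel" using borel_measurable_mono[OF wmono] by simp
  have wr: "\<forall>y. 1 \<le> w y \<and> w y \<le> U" unfolding w_def using U_ge1 by auto
  have vm: "vs n \<in> borel_measurable lborel" for n using borel_measurable_mono[OF vs(1)] by simp
  have Bd0: "0 \<le> Bd" using \<Phi>b[of 1 0] U_ge1 by (meson abs_ge_zero atLeastAtMost_iff order_refl order_trans)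
  have L: "{0..len} \<in> sets lborel" "{0..len} \<subseteq> {0..len}" by auto
  have iL: "integrable lborel (\<lambda>y. Bd * indicator {0..len} y)"
    by (intro integrable_mult_right int_ind[OF L])
  have fm: "(\<lambda>y. indicator {0..h} y * \<Phi> y (w y)) \<in> borel_measurable lborel"
    using \<Phi>m[OF wm wr] by measurable
  have sm: "(\<lambda>y. indicator {0..hs n} y * \<Phi> y (vs n y)) \<in> borel_measurable lborel" for n
  proof -
    have "\<forall>x. 1 \<le> vs n x \<and> vs n x \<le> U" using vs(2) by blast
    from \<Phi>m[OF vm this] show ?thesis by measurable
  qed
  have bound: "AE y in lborel. norm (indicator {0..hs n} y * \<Phi> y (vs n y)) \<le> Bd * indicator {0..len} y" for n
  proof (rule AE_I2)
    fix y show "norm (indicator {0..hs n} y * \<Phi> y (vs n y)) \<le> Bd * indicator {0..len} y"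
    proof (cases "y \<in> {0..hs n}")
      case True
      hence "y \<in> {0..len}" using hs(2)[of n] by auto
      thus ?thesis using True \<Phi>b[of "vs n y" y] vs(2)[of n y] by simp
    qed (use Bd0 in simp)
  qed
  define N where "N = {x. \<not> isCont F x} \<union> {h}"
  have Nc: "countable N" unfolding N_def using mono_ctble_discont[OF Fm] by simp
  have lim: "AE y in lborel. (\<lambda>n. indicator {0..hs n} y * \<Phi> y (vs n y)) \<longlonglongrightarrow> indicator {0..h} y * \<Phi> y (w y)"
    using AE_not_in[OF countable_imp_null_set_lborel[OF Nc]]
  proof (rule AE_mp, intro AE_I2 impI)
    fix y assume "y \<notin> N"
    hence cy: "isCont F y" and yh: "y \<noteq> h" unfolding N_def by auto
    have t1: "(\<lambda>n. vs n y) \<longlonglongrightarrow> F y" using F[OF cy] .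
    have "1 \<le> F y" using t1 vs(2) by (intro LIMSEQ_le_const[OF t1]) auto
    moreover have "F y \<le> U" using t1 vs(2) by (intro LIMSEQ_le_const2[OF t1]) auto
    ultimately have wy: "w y = F y" "F y \<in> {1..U}" unfolding w_def by auto
    have t2: "(\<lambda>n. \<Phi> y (vs n y)) \<longlonglongrightarrow> \<Phi> y (w y)"
      unfolding wy(1) using vs(2) by (intro continuous_on_tendsto_compose[OF \<Phi>c t1 wy(2)]) auto
    have t3: "(\<lambda>n. indicator {0..hs n} y :: real) \<longlonglongrightarrow> indicator {0..h} y"
    proof (cases "y < 0")
      case True thus ?thesis by (simp add: indicator_def)
    next
      case False
      show ?thesis
      proof (cases "y < h")
        case True
        have "eventually (\<lambda>n. y < hs n) sequentially" using order_tendstoD(1)[OF hs(1) True] .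
        hence "eventually (\<lambda>n. indicator {0..hs n} y = (indicator {0..h} y :: real)) sequentially"
          by eventually_elim (use False True in \<open>auto simp: indicator_def\<close>)
        thus ?thesis by (rule tendsto_eventually)
      next
        case False2: False
        hence "h < y" using yh by simp
        hence "eventually (\<lambda>n. hs n < y) sequentially" using order_tendstoD(2)[OF hs(1)] by blast
        hence "eventually (\<lambda>n. indicator {0..hs n} y = (indicator {0..h} y :: real)) sequentially"
          by eventually_elim (use \<open>h < y\<close> in \<open>auto simp: indicator_def\<close>)
        thus ?thesis by (rule tendsto_eventually)
      qed
    qed
    show "(\<lambda>n. indicator {0..hs n} y * \<Phi> y (vs n y)) \<longlonglongrightarrow> indicator {0..h} y * \<Phi> y (w y)"
      by (rule tendsto_mult[OF t3 t2])
  qed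
  show ?thesis unfolding w_def[symmetric]
    by (rule integral_dominated_convergence[OF fm sm iL lim bound])
qed

lemma from_w:
  assumes w: "mono w" "\<forall>y. 1 \<le> w y \<and> w y \<le> U" and h: "h > 0"
    and i: "integral\<^sup>L lborel (\<lambda>y. indicator {0..h} y * w y) = len"
    and Ic: "\<And>y. 0 \<le> y \<Longrightarrow> Ic y = I y"
  shows "admissible1 t0 len h (\<lambda>y. arcsin (1 / w y))"
    "J1 k t0 I h (\<lambda>y. arcsin (1 / w y)) = integral\<^sup>L lborel (\<lambda>y. indicator {0..h} y * (Ic y * psi (w y)))"
proof -
  have wm: "w \<in> borel_measurable lborel" using borel_measurable_mono[OF w(1)] by simp
  define ac where "ac x = arcsin (1 / max 1 (min U x))" for x
  have acc: "continuous_on UNIV ac"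
  proof -
    have "continuous_on UNIV (\<lambda>x. 1 / max 1 (min U x))" by (intro continuous_intros) auto
    moreover have "(\<lambda>x. 1 / max 1 (min U x)) ` UNIV \<subseteq> {-1..1}" by (auto simp: field_simps)
    ultimately show ?thesis unfolding ac_def[abs_def]
      by (rule continuous_on_compose2[OF continuous_on_arcsin'])
  qed
  have "(\<lambda>y. ac (w y)) \<in> borel_measurable lborel" by (rule borel_measurable_continuous_on[OF acc wm])
  moreover have "(\<lambda>y. ac (w y)) = (\<lambda>y. arcsin (1 / w y))" using w(2) unfolding ac_def by (auto intro!: ext)
  ultimately have am: "(\<lambda>y. arcsin (1 / w y)) \<in> borel_measurable lborel" by simp
  have rng: "\<forall>y\<in>{0..h}. arcsin (1 / w y) \<in> {t0..pi/2}" using arcsin_range w(2) by auto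
  have "(LINT y:{0..h}|lborel. 1 / sin (arcsin (1 / w y))) = integral\<^sup>L lborel (\<lambda>y. indicator {0..h} y * w y)"
    unfolding lint_conv using w(2) sin_arcsin_inv by (intro Bochner_Integration.integral_cong) auto
  thus "admissible1 t0 len h (\<lambda>y. arcsin (1 / w y))"
    unfolding admissible1_def using h am rng i by (auto intro: measurable_restrict_space1)
  show "J1 k t0 I h (\<lambda>y. arcsin (1 / w y)) = integral\<^sup>L lborel (\<lambda>y. indicator {0..h} y * (Ic y * psi (w y)))"
    unfolding J1_def lint_conv psi_def using Ic by (intro Bochner_Integration.integral_cong) (auto simp: indicator_def)
qed

end



context stem begin

lemma main:
  assumes len: "len > 0" and I: "\<forall>y\<ge>0. I y \<in> {0..1}" and Imono: "mono_on {0..} I"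
  shows "\<exists>h \<theta>. optimal1 k t0 len I h \<theta>"
proof -
  define Ic where "Ic y = I (max 0 y)" for y
  have Icm: "mono Ic"
  proof (rule monoI)
    fix x y :: real assume "x \<le> y"
    thus "Ic x \<le> Ic y" unfolding Ic_def by (intro mono_onD[OF Imono]) auto
  qed
  have Icb: "0 \<le> Ic y" "Ic y \<le> 1" for y unfolding Ic_def using I by auto
  have IcI: "\<And>y. 0 \<le> y \<Longrightarrow> Ic y = I y" unfolding Ic_def by simp
  have Icmeas: "Ic \<in> borel_measurable lborel" using borel_measurable_mono[OF Icm] by simp
  define J where "J p = J1 k t0 I (fst p) (snd p)" for p
  define Adm where "Adm = {p. admissible1 t0 len (fst p) (snd p)}"
  define Js where "Js = J ` Adm"
  have U0: "U > 0" using U_ge1 by simp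
  have "admissible1 t0 len (len / U) (\<lambda>y. arcsin (1 / (\<lambda>_. U) y))"
  proof (rule from_w(1)[where Ic=Ic and I=I])
    show "\<And>y. 0 \<le> y \<Longrightarrow> Ic y = I y" by (rule IcI)
    show "mono (\<lambda>_::real. U)" by (simp add: mono_def)
    show "\<forall>y::real. 1 \<le> U \<and> U \<le> U" using U_ge1 by simp
    show "len / U > 0" using U0 len by simp
    show "integral\<^sup>L lborel (\<lambda>y. indicator {0..len / U} y * U) = len" using U0 len by simp
  qed
  hence ne: "Js \<noteq> {}" unfolding Js_def Adm_def by auto
  have bnd: "J p \<le> U * len" if "p \<in> Adm" for p
  proof -
    have adm: "admissible1 t0 len (fst p) (snd p)" using that unfolding Adm_def by simp
    obtain u where u0: "u \<in> borel_measurable lborel \<and> (\<forall>y. 1 \<le> u y \<and> u y \<le> U) \<and>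
     integral\<^sup>L lborel (\<lambda>y. indicator {0..fst p} y * u y) = len \<and>
     J1 k t0 I (fst p) (snd p) = integral\<^sup>L lborel (\<lambda>y. indicator {0..fst p} y * (Ic y * psi (u y)))"
    proof -
      have "\<exists>u. u \<in> borel_measurable lborel \<and> (\<forall>y. 1 \<le> u y \<and> u y \<le> U) \<and>
       integral\<^sup>L lborel (\<lambda>y. indicator {0..fst p} y * u y) = len \<and>
       J1 k t0 I (fst p) (snd p) = integral\<^sup>L lborel (\<lambda>y. indicator {0..fst p} y * (Ic y * psi (u y)))"
        by (rule adm_facts[OF adm]) (rule IcI)
      thus ?thesis by (elim exE) (rule that)
    qed
    hence u: "u \<in> borel_measurable lborel" "\<forall>y. 1 \<le> u y \<and> u y \<le> U"
      "integral\<^sup>L lborel (\<lambda>y. indicator {0..fst p} y * u y) = len"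
      "J p = integral\<^sup>L lborel (\<lambda>y. indicator {0..fst p} y * (Ic y * psi (u y)))"
      unfolding J_def by auto
    have hp: "fst p > 0" using adm unfolding admissible1_def by simp
    have "fst p \<le> len" using h_bounds[OF u(2,1) hp u(3)] by simp
    thus ?thesis using J_bound[OF u(2,1) hp _ Icb Icmeas] u(4) by simp
  qed
  have bdd: "bdd_above Js" unfolding Js_def using bnd by (intro bdd_aboveI[of _ "U * len"]) auto
  define S where "S = Sup Js"
  define e where "e n = inverse (real (Suc n))" for n :: nat
  have e0: "e n > 0" for n unfolding e_def by simp
  have e_lim: "e \<longlonglongrightarrow> 0" unfolding e_def by (rule LIMSEQ_inverse_real_of_nat)
  have ex1: "\<exists>p. p \<in> Adm \<and> S - e n < J p" for n
  proof -
    have "S - e n < S" using e0[of n] by simp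
    hence "\<exists>x\<in>Js. S - e n < x" unfolding S_def using less_cSup_iff[OF ne bdd] by blast
    thus ?thesis unfolding Js_def by auto
  qed
  have ex1A: "\<forall>n. \<exists>p. p \<in> Adm \<and> S - e n < J p" by (intro allI) (rule ex1)
  obtain P where P': "\<forall>n. P n \<in> Adm \<and> S - e n < J (P n)" using choice[OF ex1A] by (elim exE) (rule that)
  hence P: "\<And>n. P n \<in> Adm" "\<And>n. S - e n < J (P n)" by auto
  define hs where "hs n = fst (P n)" for n
  have ex2: "\<exists>u. u \<in> borel_measurable lborel \<and> (\<forall>y. 1 \<le> u y \<and> u y \<le> U) \<and>
     integral\<^sup>L lborel (\<lambda>y. indicator {0..hs n} y * u y) = len \<and>
     J (P n) = integral\<^sup>L lborel (\<lambda>y. indicator {0..hs n} y * (Ic y * psi (u y)))" for n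
  proof -
    have "admissible1 t0 len (hs n) (snd (P n))" using P(1)[of n] unfolding Adm_def hs_def by simp
    hence "\<exists>u. u \<in> borel_measurable lborel \<and> (\<forall>y. 1 \<le> u y \<and> u y \<le> U) \<and>
       integral\<^sup>L lborel (\<lambda>y. indicator {0..hs n} y * u y) = len \<and>
       J1 k t0 I (hs n) (snd (P n)) = integral\<^sup>L lborel (\<lambda>y. indicator {0..hs n} y * (Ic y * psi (u y)))"
      by (rule adm_facts) (rule IcI)
    thus ?thesis unfolding J_def hs_def by simp
  qed
  have ex2A: "\<forall>n. \<exists>u. u \<in> borel_measurable lborel \<and> (\<forall>y. 1 \<le> u y \<and> u y \<le> U) \<and>
     integral\<^sup>L lborel (\<lambda>y. indicator {0..hs n} y * u y) = len \<and>
     J (P n) = integral\<^sup>L lborel (\<lambda>y. indicator {0..hs n} y * (Ic y * psi (u y)))" by (intro allI) (rule ex2)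
  obtain us0 where us0: "\<forall>n. us0 n \<in> borel_measurable lborel \<and> (\<forall>y. 1 \<le> us0 n y \<and> us0 n y \<le> U) \<and>
     integral\<^sup>L lborel (\<lambda>y. indicator {0..hs n} y * us0 n y) = len \<and>
     J (P n) = integral\<^sup>L lborel (\<lambda>y. indicator {0..hs n} y * (Ic y * psi (us0 n y)))"
    using choice[OF ex2A] by (elim exE) (rule that)
  obtain us where us: "\<And>n. us n \<in> borel_measurable lborel" "\<And>n. \<forall>y. 1 \<le> us n y \<and> us n y \<le> U"
    "\<And>n. integral\<^sup>L lborel (\<lambda>y. indicator {0..hs n} y * us n y) = len"
    "\<And>n. J (P n) = integral\<^sup>L lborel (\<lambda>y. indicator {0..hs n} y * (Ic y * psi (us n y)))"
    using us0 by blast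
  have hpos: "hs n > 0" for n using P(1)[of n] unfolding Adm_def admissible1_def hs_def by simp
  have hb: "hs n \<in> {len / U..len}" for n
    using h_bounds[OF us(2,1) hpos us(3), of n] U0 by (auto simp: field_simps)
  have ex3: "\<exists>v. mono v \<and> (\<forall>x. continuous (at_right x) v) \<and> (\<forall>y. 1 \<le> v y \<and> v y \<le> U) \<and>
    \<bar>integral\<^sup>L lborel (\<lambda>y. indicator {0..hs n} y * v y) - integral\<^sup>L lborel (\<lambda>y. indicator {0..hs n} y * us n y)\<bar> \<le> e n \<and>
    integral\<^sup>L lborel (\<lambda>y. indicator {0..hs n} y * (Ic y * psi (us n y))) - e n
      \<le> integral\<^sup>L lborel (\<lambda>y. indicator {0..hs n} y * (Ic y * psi (v y)))" for n
  proof (rule discretize[OF Icm Icb us(1)])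
    show "\<And>y. 1 \<le> us n y" "\<And>y. us n y \<le> U" using us(2)[of n] by auto
  qed (rule hpos, rule e0)
  have ex3A: "\<forall>n. \<exists>v. mono v \<and> (\<forall>x. continuous (at_right x) v) \<and> (\<forall>y. 1 \<le> v y \<and> v y \<le> U) \<and>
    \<bar>integral\<^sup>L lborel (\<lambda>y. indicator {0..hs n} y * v y) - integral\<^sup>L lborel (\<lambda>y. indicator {0..hs n} y * us n y)\<bar> \<le> e n \<and>
    integral\<^sup>L lborel (\<lambda>y. indicator {0..hs n} y * (Ic y * psi (us n y))) - e n
      \<le> integral\<^sup>L lborel (\<lambda>y. indicator {0..hs n} y * (Ic y * psi (v y)))" by (intro allI) (rule ex3)
  obtain vs0 where vs0: "\<forall>n. mono (vs0 n) \<and> (\<forall>x. continuous (at_right x) (vs0 n)) \<and> (\<forall>y. 1 \<le> vs0 n y \<and> vs0 n y \<le> U) \<and>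
    \<bar>integral\<^sup>L lborel (\<lambda>y. indicator {0..hs n} y * vs0 n y) - integral\<^sup>L lborel (\<lambda>y. indicator {0..hs n} y * us n y)\<bar> \<le> e n \<and>
    integral\<^sup>L lborel (\<lambda>y. indicator {0..hs n} y * (Ic y * psi (us n y))) - e n
      \<le> integral\<^sup>L lborel (\<lambda>y. indicator {0..hs n} y * (Ic y * psi (vs0 n y)))"
    using choice[OF ex3A] by (elim exE) (rule that)
  obtain vs where vs: "\<And>n. mono (vs n)" "\<And>n x. continuous (at_right x) (vs n)"
    "\<And>n y. 1 \<le> vs n y \<and> vs n y \<le> U"
    "\<And>n. \<bar>integral\<^sup>L lborel (\<lambda>y. indicator {0..hs n} y * vs n y) - integral\<^sup>L lborel (\<lambda>y. indicator {0..hs n} y * us n y)\<bar> \<le> e n"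
    "\<And>n. integral\<^sup>L lborel (\<lambda>y. indicator {0..hs n} y * (Ic y * psi (us n y))) - e n
      \<le> integral\<^sup>L lborel (\<lambda>y. indicator {0..hs n} y * (Ic y * psi (vs n y)))"
    using vs0 by blast
  obtain h0 r where r: "h0 \<in> {len / U..len}" "strict_mono r" "(hs \<circ> r) \<longlonglongrightarrow> h0"
    by (rule seq_compactE[OF compact_imp_seq_compact[OF compact_Icc] allI[OF hb]])
  have "\<exists>s. strict_mono (s::nat \<Rightarrow> nat) \<and> (\<exists>F. (\<forall>x. continuous (at_right x) F) \<and> mono F \<and> (\<forall>x. \<bar>F x\<bar> \<le> U) \<and>
    (\<forall>x. continuous (at x) F \<longrightarrow> (\<lambda>n. vs (r (s n)) x) \<longlonglongrightarrow> F x))"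
  proof (rule Helly_selection[of "\<lambda>n. vs (r n)" U])
    show "\<And>n x. continuous (at_right x) (vs (r n))" using vs(2) .
    show "\<And>n. mono (vs (r n))" using vs(1) .
    show "\<And>n x. \<bar>vs (r n) x\<bar> \<le> U" using vs(3) by (metis abs_of_nonneg order_trans zero_le_one)
  qed
  then obtain s F where s: "strict_mono s" and F: "mono F"
    "\<And>x. continuous (at x) F \<Longrightarrow> (\<lambda>n. vs (r (s n)) x) \<longlonglongrightarrow> F x" by blast
  define \<sigma> where "\<sigma> = r \<circ> s"
  have \<sigma>: "strict_mono \<sigma>" unfolding \<sigma>_def using r(2) s by (rule strict_mono_o)
  have hlim: "(\<lambda>n. hs (\<sigma> n)) \<longlonglongrightarrow> h0"
    using LIMSEQ_subseq_LIMSEQ[OF r(3) s] unfolding \<sigma>_def by (simp add: comp_def)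
  have hsr: "0 \<le> hs (\<sigma> n) \<and> hs (\<sigma> n) \<le> len" for n using hb[of "\<sigma> n"] hpos[of "\<sigma> n"] by auto
  have Fc: "\<And>x. isCont F x \<Longrightarrow> (\<lambda>n. vs (\<sigma> n) x) \<longlonglongrightarrow> F x" using F(2) unfolding \<sigma>_def by simp
  define w where "w y = max 1 (min U (F y))" for y
  have limA: "(\<lambda>n. integral\<^sup>L lborel (\<lambda>y. indicator {0..hs (\<sigma> n)} y * vs (\<sigma> n) y))
     \<longlonglongrightarrow> integral\<^sup>L lborel (\<lambda>y. indicator {0..h0} y * w y)"
    unfolding w_def
    by (rule limit_int[where \<Phi>="\<lambda>y x. x" and Bd=U, OF hlim hsr vs(1) vs(3) Fc _ _ _ F(1)])
       (auto intro: continuous_on_id)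
  have limB: "(\<lambda>n. integral\<^sup>L lborel (\<lambda>y. indicator {0..hs (\<sigma> n)} y * (Ic y * psi (vs (\<sigma> n) y))))
     \<longlonglongrightarrow> integral\<^sup>L lborel (\<lambda>y. indicator {0..h0} y * (Ic y * psi (w y)))"
    unfolding w_def
  proof (rule limit_int[where \<Phi>="\<lambda>y x. Ic y * psi x" and Bd=U, OF hlim hsr vs(1) vs(3) Fc _ _ _ F(1)])
    fix g :: "real \<Rightarrow> real" assume "g \<in> borel_measurable lborel" "\<forall>y. 1 \<le> g y \<and> g y \<le> U"
    hence "(\<lambda>y. psi (g y)) \<in> borel_measurable lborel" using psi_meas by auto
    thus "(\<lambda>y. Ic y * psi (g y)) \<in> borel_measurable lborel" using Icmeas by (intro borel_measurable_times)
  next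
    fix y show "continuous_on {1..U} (\<lambda>x. Ic y * psi x)" by (intro continuous_on_mult continuous_on_const psi_cont)
  next
    fix y x :: real assume "x \<in> {1..U}"
    hence "0 \<le> psi x" "psi x \<le> U" using psi_bounds by auto
    hence "Ic y * psi x \<le> 1 * U" "0 \<le> Ic y * psi x" using Icb[of y]
      by (intro mult_mono mult_nonneg_nonneg; simp)+
    thus "\<bar>Ic y * psi x\<bar> \<le> U" by simp
  qed
  have e\<sigma>: "(\<lambda>n. e (\<sigma> n)) \<longlonglongrightarrow> 0" using LIMSEQ_subseq_LIMSEQ[OF e_lim \<sigma>] by (simp add: comp_def)
  define a where "a n = integral\<^sup>L lborel (\<lambda>y. indicator {0..hs (\<sigma> n)} y * vs (\<sigma> n) y)" for n
  have "(\<lambda>n. a n - len) \<longlonglongrightarrow> 0"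
  proof (rule Lim_null_comparison[OF _ e\<sigma>])
    show "\<forall>\<^sub>F n in sequentially. norm (a n - len) \<le> e (\<sigma> n)"
      using vs(4) us(3) unfolding a_def by simp
  qed
  hence "(\<lambda>n. (a n - len) + len) \<longlonglongrightarrow> 0 + len" by (intro tendsto_add tendsto_const)
  hence "a \<longlonglongrightarrow> len" by simp
  hence Aeq: "integral\<^sup>L lborel (\<lambda>y. indicator {0..h0} y * w y) = len"
    using limA unfolding a_def[symmetric] by (metis LIMSEQ_unique)
  have lowlim: "(\<lambda>n. S - 2 * e (\<sigma> n)) \<longlonglongrightarrow> S - 2 * 0" by (intro tendsto_intros e\<sigma>)
  have low: "S - 2 * e (\<sigma> n) \<le> integral\<^sup>L lborel (\<lambda>y. indicator {0..hs (\<sigma> n)} y * (Ic y * psi (vs (\<sigma> n) y)))" for n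
    using P(2)[of "\<sigma> n"] us(4)[of "\<sigma> n"] vs(5)[of "\<sigma> n"] by simp
  have SB: "S \<le> integral\<^sup>L lborel (\<lambda>y. indicator {0..h0} y * (Ic y * psi (w y)))"
    using LIMSEQ_le[OF lowlim limB] low by simp
  have h0pos: "h0 > 0" using r(1) len U0 by (auto intro: less_le_trans[OF divide_pos_pos])
  have wmono: "mono w"
  proof (rule monoI)
    fix x y :: real assume "x \<le> y"
    hence "F x \<le> F y" by (rule monoD[OF F(1)])
    thus "w x \<le> w y" unfolding w_def by (auto simp: max_def min_def)
  qed
  have wr: "\<forall>y. 1 \<le> w y \<and> w y \<le> U" unfolding w_def using U_ge1 by auto
  have fw1: "admissible1 t0 len h0 (\<lambda>y. arcsin (1 / w y))"
    by (rule from_w(1)[OF wmono wr h0pos Aeq]) (rule IcI)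
  have fw2: "J1 k t0 I h0 (\<lambda>y. arcsin (1 / w y)) = integral\<^sup>L lborel (\<lambda>y. indicator {0..h0} y * (Ic y * psi (w y)))"
    by (rule from_w(2)[OF wmono wr h0pos Aeq]) (rule IcI)
  have "optimal1 k t0 len I h0 (\<lambda>y. arcsin (1 / w y))"
    unfolding optimal1_def
  proof (intro conjI allI impI)
    show "admissible1 t0 len h0 (\<lambda>y. arcsin (1 / w y))" by (rule fw1)
    fix h' \<theta>' assume "admissible1 t0 len h' \<theta>'"
    hence "J (h', \<theta>') \<in> Js" unfolding Js_def Adm_def by auto
    hence "J (h', \<theta>') \<le> S" unfolding S_def using bdd by (rule cSup_upper)
    thus "J1 k t0 I h' \<theta>' \<le> J1 k t0 I h0 (\<lambda>y. arcsin (1 / w y))"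
      using SB fw2 unfolding J_def by simp
  qed
  thus ?thesis by blast
qed

end

theorem theorem3p1:
  fixes \<theta>\<^sub>0 len \<kappa> :: real and I :: "real \<Rightarrow> real"
  assumes "0 < \<theta>\<^sub>0" and "\<theta>\<^sub>0 < pi/2" and "len > 0" and "\<kappa> > 0"
    and "\<forall>y\<ge>0. I y \<in> {0..1}"
    and "mono_on {0..} I"
  shows "\<exists>h \<theta>. optimal1 \<kappa> \<theta>\<^sub>0 len I h \<theta>"
proof -
  interpret stem "\<theta>\<^sub>0" "\<kappa>" using assms by unfold_locales auto
  show ?thesis using assms by (intro main) auto
qed

end
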